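(* Consider the stochastic energy exchange model and the notation of the context. For every sufficiently small $\eta>0$, with $\alpha=1-\frac{1}{2(1-\eta)}$, there exist constants $C_1>0$ and $M'$ depending on $N$ and $\eta$ such that $$\mathbb{E}_{\mathbf{E}}[V(\mathbf{E}_{\tau_1^+})]\le V(\mathbf{E})-\frac{C_1}{\mathcal{R}}V^{\alpha}(\mathbf{E})$$ for all $\mathbf{E}\in\mathbb{R}^N_+$ with $V(\mathbf{E})>M'$.
   Context: Fix $N\ge1$, $T_L,T_R>0$, a sufficiently large $K$ ($K\gg T_L,T_R$) and $R(a,b)=\min\{K,\sqrt{\min(a,b)}\}$. Write $E_0:=T_L$, $E_{N+1}:=T_R$. The stochastic energy exchange model is the Markov jump process $\mathbf{E}_t=(E_1(t),\dots,E_N(t))$ on $\mathbb{R}^N_+$ with independent exponential clocks $i=1,\dots,N+1$, clock $i$ having rate $R_i=R(E_{i-1},E_i)$. When clock $i$ with $2\le i\le N$ rings, $(E_{i-1},E_i)\mapsto(p(E_{i-1}+E_i),(1-p)(E_{i-1}+E_i))$, $p$ uniform on $(0,1)$; when clock $1$ (resp. $N+1$) rings, $E_1\mapsto p(E_1+X_L)$ (resp. $E_N\mapsto p(E_N+X_R)$), $X_L,X_R$ exponential with means $T_L,T_R$; all randomness independent. Let $\tau_1$ be the time of the first clock ring, $\mathbf{E}_{\tau_1^+}$ the configuration immediately after it, $\mathcal{R}=\sum_{i=1}^{N+1}R_i$, and $\mathbb{E}_{\mathbf{E}}$ expectation with $\mathbf{E}_0=\mathbf{E}$. Let $a_m=1-\frac{2^{m-1}-1}{2^N-1}$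 and $V(\mathbf{E})=\sum_{m=1}^N\sum_{k=1}^{N-m+1}\big(\sum_{j=0}^{m-1}E_{k+j}\big)^{a_m\eta-1}$. *)

theory Defs
  imports "HOL-Analysis.Analysis"
begin

text \<open>Configurations are functions nat => real; only the entries 1..N matter.\<close>

definition extE :: "nat \<Rightarrow> real \<Rightarrow> real \<Rightarrow> (nat \<Rightarrow> real) \<Rightarrow> nat \<Rightarrow> real" where
  "extE N TL TR E i = (if i = 0 then TL else if i = N + 1 then TR else E i)"

definition rateR :: "real \<Rightarrow> real \<Rightarrow> real \<Rightarrow> real" where
  "rateR K a b = min K (sqrt (min a b))"

definition clockRate :: "nat \<Rightarrow> real \<Rightarrow> real \<Rightarrow> real \<Rightarrow> (nat \<Rightarrow> real) \<Rightarrow> nat \<Rightarrow> real" where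
  "clockRate N TL TR K E i = rateR K (extE N TL TR E (i - 1)) (extE N TL TR E i)"

definition totRate :: "nat \<Rightarrow> real \<Rightarrow> real \<Rightarrow> real \<Rightarrow> (nat \<Rightarrow> real) \<Rightarrow> real" where
  "totRate N TL TR K E = (\<Sum>i = 1..N + 1. clockRate N TL TR K E i)"

definition aexp :: "nat \<Rightarrow> nat \<Rightarrow> real" where
  "aexp N m = 1 - (2 ^ (m - 1) - 1) / (2 ^ N - 1)"

definition Vfun :: "nat \<Rightarrow> real \<Rightarrow> (nat \<Rightarrow> real) \<Rightarrow> real" where
  "Vfun N \<eta> E = (\<Sum>m = 1..N. \<Sum>k = 1..N - m + 1.
      (\<Sum>j = 0..m - 1. E (k + j)) powr (aexp N m * \<eta> - 1))"

text \<open>Interior exchange at clock i (2 <= i <= N) with splitting fraction p.\<close>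
definition innerJump :: "nat \<Rightarrow> real \<Rightarrow> (nat \<Rightarrow> real) \<Rightarrow> nat \<Rightarrow> real" where
  "innerJump i p E = E(i - 1 := p * (E (i - 1) + E i), i := (1 - p) * (E (i - 1) + E i))"

definition bdJump :: "nat \<Rightarrow> real \<Rightarrow> real \<Rightarrow> (nat \<Rightarrow> real) \<Rightarrow> nat \<Rightarrow> real" where
  "bdJump j p x E = E(j := p * (E j + x))"

definition bdExp :: "nat \<Rightarrow> real \<Rightarrow> real \<Rightarrow> nat \<Rightarrow> (nat \<Rightarrow> real) \<Rightarrow> ennreal" where
  "bdExp N \<eta> T j E = (\<integral>\<^sup>+ p. \<integral>\<^sup>+ x. indicator {0<..<1} p * indicator {0<..} x
        * ennreal (exp (- x / T) / T) * ennreal (Vfun N \<eta> (bdJump j p x E)) \<partial>lborel \<partial>lborel)"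

definition innerExp :: "nat \<Rightarrow> real \<Rightarrow> nat \<Rightarrow> (nat \<Rightarrow> real) \<Rightarrow> ennreal" where
  "innerExp N \<eta> i E = (\<integral>\<^sup>+ p. indicator {0<..<1} p * ennreal (Vfun N \<eta> (innerJump i p E)) \<partial>lborel)"

definition jumpExp :: "nat \<Rightarrow> real \<Rightarrow> real \<Rightarrow> real \<Rightarrow> nat \<Rightarrow> (nat \<Rightarrow> real) \<Rightarrow> ennreal" where
  "jumpExp N TL TR \<eta> i E =
     (if i = 1 then bdExp N \<eta> TL 1 E
      else if i = N + 1 then bdExp N \<eta> TR N E
      else innerExp N \<eta> i E)"

text \<open>E_E[V(E_{tau_1^+})]: clock i rings first with probability R_i / R (as ennreal, may be infinite).\<close>
definition expVafter :: "nat \<Rightarrow> real \<Rightarrow> real \<Rightarrow> real \<Rightarrow> real \<Rightarrow> (nat \<Rightarrow> real) \<Rightarrow> ennreal" where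
  "expVafter N TL TR K \<eta> E =
     (\<Sum>i = 1..N + 1. ennreal (clockRate N TL TR K E i / totRate N TL TR K E) * jumpExp N TL TR \<eta> i E)"

definition alphaE :: "real \<Rightarrow> real" where
  "alphaE \<eta> = 1 - 1 / (2 * (1 - \<eta>))"

end

theory Submission
  imports Defs "HOL-Probability.Distributions"
begin


lemma int_powr01:
  fixes \<beta> :: real assumes "0 < \<beta>" "\<beta> < 1"
  shows "(\<integral>\<^sup>+p. indicator {0<..<1} p * ennreal (p powr (-\<beta>)) \<partial>lborel) \<le> ennreal (1/(1-\<beta>))"
proof -
  have h: "((\<lambda>x. x powr (-\<beta>)) has_integral (1 powr (-\<beta>+1) / (-\<beta>+1))) {0..1}"
    by (rule has_integral_powr_from_0) (use assms in auto)
  have e: "(\<integral>\<^sup>+p. ennreal (indicator {0..1} p * p powr (-\<beta>)) \<partial>lborel) = ennreal (1 powr (-\<beta>+1) / (-\<beta>+1))"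
    by (rule nn_integral_has_integral_lebesgue[OF _ h]) auto
  have "(\<integral>\<^sup>+p. indicator {0<..<1} p * ennreal (p powr (-\<beta>)) \<partial>lborel)
     \<le> (\<integral>\<^sup>+p. ennreal (indicator {0..1} p * p powr (-\<beta>)) \<partial>lborel)"
    by (intro nn_integral_mono) (auto simp: indicator_def)
  also have "\<dots> = ennreal (1/(1-\<beta>))" using e by simp
  finally show ?thesis .
qed

lemma int_powr01':
  fixes \<beta> :: real assumes "0 < \<beta>" "\<beta> < 1"
  shows "(\<integral>\<^sup>+p. indicator {0<..<1} p * ennreal ((1-p) powr (-\<beta>)) \<partial>lborel) \<le> ennreal (1/(1-\<beta>))"
proof -
  let ?f = "\<lambda>p::real. indicator {0<..<1} p * ennreal (p powr (-\<beta>))"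
  have m: "?f \<in> borel_measurable borel" by measurable
  have "(\<integral>\<^sup>+p. ?f p \<partial>lborel) = (\<integral>\<^sup>+x. ?f (1 + (-1) * x) \<partial>lborel)"
    using nn_integral_real_affine[OF m, of "-1" 1] by simp
  also have "(\<lambda>x. ?f (1 + (-1) * x)) = (\<lambda>p. indicator {0<..<1} p * ennreal ((1-p) powr (-\<beta>)))"
    by (auto simp: indicator_def fun_eq_iff)
  finally show ?thesis using int_powr01[OF assms] by simp
qed

lemma int_exp:
  fixes T :: real assumes "0 < T"
  shows "(\<integral>\<^sup>+x. indicator {0<..} x * ennreal (exp (- x / T) / T) \<partial>lborel) \<le> 1"
proof -
  have "(\<integral>\<^sup>+x. indicator {0<..} x * ennreal (exp (- x / T) / T) \<partial>lborel)
    \<le> (\<integral>\<^sup>+ x. ennreal (erlang_density 0 (1/T) x * x ^ 0) \<partial>lborel)"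
    by (intro nn_integral_mono) (auto simp: indicator_def erlang_density_def mult.commute)
  also have "\<dots> = 1" using nn_integral_erlang_ith_moment[of "1/T" 0 0] assms by simp
  finally show ?thesis .
qed

lemma ennreal_plus3: "0 \<le> a \<Longrightarrow> 0 \<le> b \<Longrightarrow> 0 \<le> c \<Longrightarrow> ennreal a + ennreal b + ennreal c = ennreal (a + b + c)"
  by (simp add: ennreal_plus)

lemma inner_int:
  fixes \<beta> W Q :: real assumes "0 < \<beta>" "\<beta> < 1" "0 \<le> W" "0 \<le> Q"
  shows "(\<integral>\<^sup>+p. indicator {0<..<1} p * ennreal (W + (p powr (-\<beta>) + (1-p) powr (-\<beta>)) * Q) \<partial>lborel)
     \<le> ennreal (W + 2 * Q / (1-\<beta>))"
proof -
  have eq: "(\<lambda>p. indicator {0<..<1} p * ennreal (W + (p powr (-\<beta>) + (1-p) powr (-\<beta>)) * Q))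
     = (\<lambda>p. (indicator {0<..<1} p * ennreal W + ennreal Q * (indicator {0<..<1} p * ennreal (p powr (-\<beta>))))
          + ennreal Q * (indicator {0<..<1} p * ennreal ((1-p) powr (-\<beta>))))"
  proof (rule ext)
    fix p :: real
    show "indicator {0<..<1} p * ennreal (W + (p powr (-\<beta>) + (1-p) powr (-\<beta>)) * Q)
     = (indicator {0<..<1} p * ennreal W + ennreal Q * (indicator {0<..<1} p * ennreal (p powr (-\<beta>))))
          + ennreal Q * (indicator {0<..<1} p * ennreal ((1-p) powr (-\<beta>)))"
      using assms by (cases "p \<in> {0<..<1}") (auto simp: ennreal_plus[symmetric] ennreal_mult[symmetric] algebra_simps simp del: ennreal_plus)
  qed
  have "(\<integral>\<^sup>+p. indicator {0<..<1} p * ennreal (W + (p powr (-\<beta>) + (1-p) powr (-\<beta>)) * Q) \<partial>lborel)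
    = ((\<integral>\<^sup>+(p::real). indicator {0<..<1} p * ennreal W \<partial>lborel) + ennreal Q * (\<integral>\<^sup>+p. indicator {0<..<1} p * ennreal (p powr (-\<beta>)) \<partial>lborel))
      + ennreal Q * (\<integral>\<^sup>+p. indicator {0<..<1} p * ennreal ((1-p) powr (-\<beta>)) \<partial>lborel)"
    unfolding eq
    apply (subst nn_integral_add, measurable)
    apply (subst nn_integral_add, measurable)
    apply (subst nn_integral_cmult, measurable)+
    done
  also have "\<dots> \<le> (ennreal W + ennreal Q * ennreal (1/(1-\<beta>))) + ennreal Q * ennreal (1/(1-\<beta>))"
    apply (intro add_mono mult_left_mono int_powr01 int_powr01' order.refl)
    using assms by (auto simp: nn_integral_cmult_indicator ennreal_mult' mult.commute)
  also have "\<dots> = ennreal W + ennreal (Q * (1/(1-\<beta>))) + ennreal (Q * (1/(1-\<beta>)))"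
  proof -
    have "ennreal Q * ennreal (1/(1-\<beta>)) = ennreal (Q * (1/(1-\<beta>)))"
      by (rule ennreal_mult[symmetric]) (use assms in auto)
    then show ?thesis by simp
  qed
  also have "\<dots> = ennreal (W + Q * (1/(1-\<beta>)) + Q * (1/(1-\<beta>)))"
    by (rule ennreal_plus3) (use assms in auto)
  also have "\<dots> = ennreal (W + 2 * Q / (1-\<beta>))"
    by (rule arg_cong[where f=ennreal]) (simp add: field_simps)
  finally show ?thesis .
qed

lemma int_exp_h:
  fixes T \<beta> :: real assumes "0 < T" "0 < \<beta>" "\<beta> < 1"
  shows "(\<integral>\<^sup>+x. indicator {0<..} x * ennreal (exp (- x / T) / T) * ennreal (if x < 1 then x powr (-\<beta>) else 1) \<partial>lborel)
     \<le> ennreal (1/(T*(1-\<beta>)) + 1)"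
proof -
  have "(\<integral>\<^sup>+x. indicator {0<..} x * ennreal (exp (- x / T) / T) * ennreal (if x < 1 then x powr (-\<beta>) else 1) \<partial>lborel)
     \<le> (\<integral>\<^sup>+x. ennreal (1/T) * (indicator {0<..<1} x * ennreal (x powr (-\<beta>))) + indicator {0<..} x * ennreal (exp (- x / T) / T) \<partial>lborel)"
  proof (intro nn_integral_mono)
    fix x :: real
    show "indicator {0<..} x * ennreal (exp (- x / T) / T) * ennreal (if x < 1 then x powr (-\<beta>) else 1)
        \<le> ennreal (1/T) * (indicator {0<..<1} x * ennreal (x powr (-\<beta>))) + indicator {0<..} x * ennreal (exp (- x / T) / T)"
    proof (cases "0 < x \<and> x < 1")
      case True
      have "exp (- x / T) / T \<le> 1/T" using assms True by (simp add: divide_right_mono)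
      then have "ennreal (exp (- x / T) / T) * ennreal (x powr (-\<beta>)) \<le> ennreal (1/T) * ennreal (x powr (-\<beta>))"
        by (intro mult_right_mono ennreal_leI) auto
      then show ?thesis using True by (simp add: indicator_def add_increasing2)
    next
      case False
      then show ?thesis by (cases "0 < x") (auto simp: indicator_def)
    qed
  qed
  also have "\<dots> = ennreal (1/T) * (\<integral>\<^sup>+x. indicator {0<..<1} x * ennreal (x powr (-\<beta>)) \<partial>lborel)
      + (\<integral>\<^sup>+x. indicator {0<..} x * ennreal (exp (- x / T) / T) \<partial>lborel)"
    apply (subst nn_integral_add, measurable)
    apply (subst nn_integral_cmult, measurable)
    done
  also have "\<dots> \<le> ennreal (1/T) * ennreal (1/(1-\<beta>)) + 1"
    by (intro add_mono mult_left_mono int_powr01 int_exp) (use assms in auto)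
  also have "\<dots> = ennreal (1/(T*(1-\<beta>)) + 1)"
  proof -
    have "ennreal (1/T) * ennreal (1/(1-\<beta>)) = ennreal (1/T * (1/(1-\<beta>)))"
      by (rule ennreal_mult[symmetric]) (use assms in auto)
    then show ?thesis using assms by (simp add: ennreal_plus)
  qed
  finally show ?thesis .
qed

lemma bd_int:
  fixes T \<beta> W c :: real assumes "0 < T" "0 < \<beta>" "\<beta> < 1" "0 \<le> W" "0 \<le> c"
  shows "(\<integral>\<^sup>+p. \<integral>\<^sup>+x. indicator {0<..<1} p * indicator {0<..} x * ennreal (exp (- x / T) / T)
      * ennreal (W + c * p powr (-\<beta>) * (if x < 1 then x powr (-\<beta>) else 1)) \<partial>lborel \<partial>lborel)
    \<le> ennreal (W + 2 * (c * (1/(T*(1-\<beta>)) + 1)) / (1-\<beta>))"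
proof -
  define H where "H = 1/(T*(1-\<beta>)) + 1"
  have H0: "0 \<le> H" using assms by (simp add: H_def)
  have inner: "(\<integral>\<^sup>+x. indicator {0<..<1} p * indicator {0<..} x * ennreal (exp (- x / T) / T)
      * ennreal (W + c * p powr (-\<beta>) * (if x < 1 then x powr (-\<beta>) else 1)) \<partial>lborel)
     \<le> indicator {0<..<1} p * ennreal (W + (p powr (-\<beta>) + (1-p) powr (-\<beta>)) * (c * H))" for p :: real
  proof (cases "p \<in> {0<..<1}")
    case False then show ?thesis by simp
  next
    case True
    have cp: "0 \<le> c * p powr (-\<beta>)" using assms by simp
    have "(\<integral>\<^sup>+x. indicator {0<..<1} p * indicator {0<..} x * ennreal (exp (- x / T) / T)
      * ennreal (W + c * p powr (-\<beta>) * (if x < 1 then x powr (-\<beta>) else 1)) \<partial>lborel)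
      = (\<integral>\<^sup>+x. ennreal W * (indicator {0<..} x * ennreal (exp (- x / T) / T))
          + ennreal (c * p powr (-\<beta>)) * (indicator {0<..} x * ennreal (exp (- x / T) / T) * ennreal (if x < 1 then x powr (-\<beta>) else 1)) \<partial>lborel)"
    proof (intro nn_integral_cong)
      fix x :: real
      have "ennreal (W + c * p powr (-\<beta>) * (if x < 1 then x powr (-\<beta>) else 1))
          = ennreal W + ennreal (c * p powr (-\<beta>)) * ennreal (if x < 1 then x powr (-\<beta>) else 1)"
        using assms cp by (simp add: ennreal_plus ennreal_mult)
      then show "indicator {0<..<1} p * indicator {0<..} x * ennreal (exp (- x / T) / T)
      * ennreal (W + c * p powr (-\<beta>) * (if x < 1 then x powr (-\<beta>) else 1))
       = ennreal W * (indicator {0<..} x * ennreal (exp (- x / T) / T))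
          + ennreal (c * p powr (-\<beta>)) * (indicator {0<..} x * ennreal (exp (- x / T) / T) * ennreal (if x < 1 then x powr (-\<beta>) else 1))"
        using True by (simp add: algebra_simps)
    qed
    also have "\<dots> = ennreal W * (\<integral>\<^sup>+x. indicator {0<..} x * ennreal (exp (- x / T) / T) \<partial>lborel)
       + ennreal (c * p powr (-\<beta>)) * (\<integral>\<^sup>+x. indicator {0<..} x * ennreal (exp (- x / T) / T) * ennreal (if x < 1 then x powr (-\<beta>) else 1) \<partial>lborel)"
      apply (subst nn_integral_add, measurable)
      apply (subst nn_integral_cmult, measurable)+
      done
    also have "\<dots> \<le> ennreal W * 1 + ennreal (c * p powr (-\<beta>)) * ennreal H"
      unfolding H_def by (intro add_mono mult_left_mono int_exp int_exp_h) (use assms in auto)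
    also have "\<dots> = ennreal (W + c * p powr (-\<beta>) * H)"
      using assms cp H0 by (simp add: ennreal_plus ennreal_mult)
    also have "\<dots> \<le> ennreal (W + (p powr (-\<beta>) + (1-p) powr (-\<beta>)) * (c * H))"
      using assms H0 by (intro ennreal_leI) (simp add: algebra_simps mult_nonneg_nonneg)
    finally show ?thesis using True by simp
  qed
  have "(\<integral>\<^sup>+p. \<integral>\<^sup>+x. indicator {0<..<1} p * indicator {0<..} x * ennreal (exp (- x / T) / T)
      * ennreal (W + c * p powr (-\<beta>) * (if x < 1 then x powr (-\<beta>) else 1)) \<partial>lborel \<partial>lborel)
    \<le> (\<integral>\<^sup>+p. indicator {0<..<1} p * ennreal (W + (p powr (-\<beta>) + (1-p) powr (-\<beta>)) * (c * H)) \<partial>lborel)"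
    by (intro nn_integral_mono inner)
  also have "\<dots> \<le> ennreal (W + 2 * (c * H) / (1-\<beta>))"
    by (rule inner_int) (use assms H0 in auto)
  finally show ?thesis by (simp add: H_def)
qed



definition Ssum :: "(nat \<Rightarrow> real) \<Rightarrow> nat \<Rightarrow> nat \<Rightarrow> real" where
  "Ssum x m k = sum x {k..<k+m}"

definition Idx :: "nat \<Rightarrow> (nat \<times> nat) set" where
  "Idx N = Sigma {1..N} (\<lambda>m. {1..N-m+1})"

lemma Idx_iff: "(m,k) \<in> Idx N \<longleftrightarrow> 1 \<le> m \<and> m \<le> N \<and> 1 \<le> k \<and> k + m \<le> N + 1"
  unfolding Idx_def by auto

lemma finite_Idx: "finite (Idx N)"
  unfolding Idx_def by auto

lemma card_Idx: "card (Idx N) \<le> N * N"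
proof -
  have "Idx N \<subseteq> {1..N} \<times> {1..N}" by (auto simp: Idx_iff)
  then have "card (Idx N) \<le> card ({1..N} \<times> {1..N})" by (intro card_mono) auto
  then show ?thesis by (simp add: card_cartesian_product)
qed

lemma sum_shift0: fixes x :: "nat \<Rightarrow> real" and m k :: nat shows "1 \<le> m \<Longrightarrow> (\<Sum>j = 0..m - 1. x (k + j)) = sum x {k..<k+m}"
proof -
  assume "1 \<le> m"
  then have "{0..m-1} = {0..<m}" by auto
  then have "(\<Sum>j = 0..m - 1. x (k + j)) = (\<Sum>j\<in>{0..<m}. x (j + k))" by (simp add: add.commute)
  also have "\<dots> = sum x {0 + k..<m + k}" by (rule sum.shift_bounds_nat_ivl[symmetric])
  finally show ?thesis by (simp add: add.commute)
qed

lemma Vfun_Idx: "Vfun N \<eta> x = (\<Sum>(m,k)\<in>Idx N. Ssum x m k powr (aexp N m * \<eta> - 1))"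
proof -
  have "Vfun N \<eta> x = (\<Sum>m = 1..N. \<Sum>k = 1..N - m + 1. Ssum x m k powr (aexp N m * \<eta> - 1))"
    unfolding Vfun_def Ssum_def
    by (intro sum.cong refl arg_cong2[where f="(powr)"] sum_shift0) auto
  also have "\<dots> = (\<Sum>(m,k)\<in>Idx N. Ssum x m k powr (aexp N m * \<eta> - 1))"
    unfolding Idx_def by (rule sum.Sigma) auto
  finally show ?thesis .
qed

lemma innerJump_sum:
  assumes "1 \<le> i" "finite A"
  shows "sum (innerJump i p x) A = sum x A
     + (if i - 1 \<in> A then p * (x (i-1) + x i) - x (i-1) else 0)
     + (if i \<in> A then (1-p) * (x (i-1) + x i) - x i else 0)"
proof -
  have ne: "i - 1 \<noteq> i" using assms by simp
  have "innerJump i p x = (\<lambda>j. x j + (if j = i - 1 then p * (x (i-1) + x i) - x (i-1) else 0)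
       + (if j = i then (1-p) * (x (i-1) + x i) - x i else 0))"
    using ne by (auto simp: innerJump_def fun_eq_iff)
  then show ?thesis using assms by (simp add: sum.distrib sum.delta)
qed

lemma bdJump_sum:
  assumes "finite A"
  shows "sum (bdJump j p X x) A = sum x A + (if j \<in> A then p * (x j + X) - x j else 0)"
proof -
  have "bdJump j p X x = (\<lambda>i. x i + (if i = j then p * (x j + X) - x j else 0))"
    by (auto simp: bdJump_def fun_eq_iff)
  then show ?thesis using assms by (simp add: sum.distrib sum.delta)
qed

lemma sum_bound:
  fixes t t' a :: "'a \<Rightarrow> real"
  assumes "finite S" "I \<in> S" "flag \<Longrightarrow> aff I"
    "\<And>J. J \<in> S \<Longrightarrow> t' J \<le> (if aff J then a J else t J)"
    "\<And>J. J \<in> S \<Longrightarrow> 0 \<le> t J"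
  shows "sum t' S \<le> sum t S - (if flag then t I else 0) + sum (\<lambda>J. if aff J then a J else 0) S"
proof -
  have "\<And>J. J \<in> S \<Longrightarrow> t' J + (if J = I \<and> flag then t I else 0) \<le> t J + (if aff J then a J else 0)"
  proof -
    fix J assume J: "J \<in> S"
    show "t' J + (if J = I \<and> flag then t I else 0) \<le> t J + (if aff J then a J else 0)"
    proof (cases "J = I \<and> flag")
      case True
      then show ?thesis using assms(3) assms(4)[OF J] by auto
    next
      case False
      then show ?thesis using assms(4)[OF J] assms(5)[OF J] by (cases "aff J") auto
    qed
  qed
  then have "sum (\<lambda>J. t' J + (if J = I \<and> flag then t I else 0)) S \<le> sum (\<lambda>J. t J + (if aff J then a J else 0)) S"
    by (rule sum_mono)
  moreover have "sum (\<lambda>J. (if J = I \<and> flag then t I else 0)) S = (if flag then t I else 0)"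
    using assms(1,2) by (cases flag) (simp_all add: sum.delta')
  ultimately show ?thesis by (simp add: sum.distrib)
qed

lemma Ssum_pos:
  assumes pos: "\<forall>j\<in>{1..N}. x j > 0" and "1 \<le> k" "k + m \<le> N + 1" "1 \<le> m"
  shows "Ssum x m k > 0"
  unfolding Ssum_def using assms by (intro sum_pos) auto

lemma Ssum_ge_mem:
  assumes pos: "\<forall>j\<in>{1..N}. x j > 0" and "1 \<le> k" "k + m \<le> N + 1" "j \<in> {k..<k+m}"
  shows "x j \<le> Ssum x m k"
  unfolding Ssum_def using assms by (intro member_le_sum) (auto intro!: less_imp_le)

lemma Ssum_nonneg:
  assumes pos: "\<forall>j\<in>{1..N}. x j > 0" and "1 \<le> k" "k + m \<le> N + 1"
  shows "0 \<le> Ssum x m k"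
  unfolding Ssum_def using assms by (intro sum_nonneg) (auto intro: less_imp_le)

lemma inner_cases:
  fixes x :: "nat \<Rightarrow> real"
  assumes pos: "\<forall>j\<in>{1..N}. x j > 0" and i: "2 \<le> i" "i \<le> N" and p: "0 < p" "p < 1"
    and mk: "(m,k) \<in> Idx N"
  shows "\<not> ((i - 1 \<in> {k..<k+m}) \<noteq> (i \<in> {k..<k+m})) \<Longrightarrow> Ssum (innerJump i p x) m k = Ssum x m k"
    and "i \<in> {k..<k+m} \<Longrightarrow> i - 1 \<notin> {k..<k+m} \<Longrightarrow>
          k = i \<and> (1-p) * Ssum x (m+1) (k-1) \<le> Ssum (innerJump i p x) m k \<and> (m+1, k-1) \<in> Idx N"
    and "i - 1 \<in> {k..<k+m} \<Longrightarrow> i \<notin> {k..<k+m} \<Longrightarrow>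
          k + m = i \<and> p * Ssum x (m+1) k \<le> Ssum (innerJump i p x) m k \<and> (m+1, k) \<in> Idx N"
proof -
  have mk': "1 \<le> m" "m \<le> N" "1 \<le> k" "k + m \<le> N + 1" using mk by (auto simp: Idx_iff)
  have eq: "Ssum (innerJump i p x) m k = Ssum x m k
     + (if i - 1 \<in> {k..<k+m} then p * (x (i-1) + x i) - x (i-1) else 0)
     + (if i \<in> {k..<k+m} then (1-p) * (x (i-1) + x i) - x i else 0)"
    unfolding Ssum_def by (rule innerJump_sum) (use i in auto)
  have "i - 1 \<in> {1..N}" "i \<in> {1..N}" using i by auto
  then have xi: "x i > 0" "x (i-1) > 0" using pos by blast+
  {
    assume "\<not> ((i - 1 \<in> {k..<k+m}) \<noteq> (i \<in> {k..<k+m}))"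
    then show "Ssum (innerJump i p x) m k = Ssum x m k"
      using eq by (cases "i \<in> {k..<k+m}") (auto simp: algebra_simps)
  }
  {
    assume a: "i \<in> {k..<k+m}" "i - 1 \<notin> {k..<k+m}"
    then have ki: "k = i" using i by auto
    have mem: "x i \<le> Ssum x m k" by (rule Ssum_ge_mem[OF pos mk'(3,4)]) (use a in auto)
    have L: "Ssum x (m+1) (k-1) = x (i-1) + Ssum x m k"
    proof -
      have "{k-1..<k-1+(m+1)} = insert (i-1) {k..<k+m}" using ki i by auto
      then show ?thesis unfolding Ssum_def using ki i by simp
    qed
    have "(1-p) * Ssum x (m+1) (k-1) = (1-p) * (x (i-1) + x i) + (1-p) * (Ssum x m k - x i)"
      using L by (simp add: algebra_simps)
    also have "\<dots> \<le> (1-p) * (x (i-1) + x i) + (Ssum x m k - x i)"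
      using p mem by (intro add_left_mono) (simp add: mult_left_le_one_le)
    also have "\<dots> = Ssum (innerJump i p x) m k" using eq a by (simp del: atLeastLessThan_iff)
    finally show "k = i \<and> (1-p) * Ssum x (m+1) (k-1) \<le> Ssum (innerJump i p x) m k \<and> (m+1, k-1) \<in> Idx N"
      using ki i mk' by (auto simp: Idx_iff)
  }
  {
    assume a: "i - 1 \<in> {k..<k+m}" "i \<notin> {k..<k+m}"
    then have ki: "k + m = i" using i by auto
    have mem: "x (i-1) \<le> Ssum x m k" by (rule Ssum_ge_mem[OF pos mk'(3,4)]) (use a in auto)
    have L: "Ssum x (m+1) k = Ssum x m k + x i"
      unfolding Ssum_def using ki by simp
    have "p * Ssum x (m+1) k = p * (x (i-1) + x i) + p * (Ssum x m k - x (i-1))"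
      using L by (simp add: algebra_simps)
    also have "\<dots> \<le> p * (x (i-1) + x i) + (Ssum x m k - x (i-1))"
      using p mem by (intro add_left_mono) (simp add: mult_left_le_one_le)
    also have "\<dots> = Ssum (innerJump i p x) m k" using eq a by (simp del: atLeastLessThan_iff)
    finally show "k + m = i \<and> p * Ssum x (m+1) k \<le> Ssum (innerJump i p x) m k \<and> (m+1, k) \<in> Idx N"
      using ki i mk' by (auto simp: Idx_iff)
  }
qed

lemma bd_cases:
  fixes x :: "nat \<Rightarrow> real"
  assumes pos: "\<forall>j\<in>{1..N}. x j > 0" and j: "j \<in> {1..N}" and p: "0 < p" "p < 1" and X: "0 < X"
    and mk: "(m,k) \<in> Idx N"
  shows "j \<notin> {k..<k+m} \<Longrightarrow> Ssum (bdJump j p X x) m k = Ssum x m k"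
    and "j \<in> {k..<k+m} \<Longrightarrow> p * X \<le> Ssum (bdJump j p X x) m k"
proof -
  have mk': "1 \<le> m" "m \<le> N" "1 \<le> k" "k + m \<le> N + 1" using mk by (auto simp: Idx_iff)
  have eq: "Ssum (bdJump j p X x) m k = Ssum x m k + (if j \<in> {k..<k+m} then p * (x j + X) - x j else 0)"
    unfolding Ssum_def by (rule bdJump_sum) auto
  show "j \<notin> {k..<k+m} \<Longrightarrow> Ssum (bdJump j p X x) m k = Ssum x m k" using eq by (simp del: atLeastLessThan_iff)
  assume a: "j \<in> {k..<k+m}"
  have mem: "x j \<le> Ssum x m k" by (rule Ssum_ge_mem[OF pos mk'(3,4) a])
  have "x j > 0" using pos j by blast
  then have "p * X \<le> p * (x j + X)" using p by simp
  also have "\<dots> \<le> Ssum x m k + (p * (x j + X) - x j)" using mem by simp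
  also have "\<dots> = Ssum (bdJump j p X x) m k" using eq a by (simp del: atLeastLessThan_iff)
  finally show "p * X \<le> Ssum (bdJump j p X x) m k" .
qed

lemma pow_helper:
  fixes q L S e \<beta> G :: real
  assumes "0 < q" "q < 1" "0 < L" "q * L \<le> S" "-\<beta> \<le> e" "e \<le> 0" "q powr (-\<beta>) \<le> G"
  shows "S powr e \<le> G * L powr e"
proof -
  have "S powr e \<le> (q * L) powr e" using assms by (intro powr_mono2') auto
  also have "\<dots> = q powr e * L powr e" using assms by (simp add: powr_mult)
  also have "\<dots> \<le> q powr (-\<beta>) * L powr e" using assms by (intro mult_right_mono powr_mono') auto
  also have "\<dots> \<le> G * L powr e" using assms by (intro mult_right_mono) auto
  finally show ?thesis .
qed

lemma aexp_bounds:
  assumes "1 \<le> m" "m \<le> N"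
  shows "1/2 \<le> aexp N m" "aexp N m \<le> 1"
proof -
  have a: "(1::real) \<le> 2 ^ (m-1)" by simp
  have b: "(2::real) ^ m \<le> 2 ^ N" using assms by (intro power_increasing) auto
  have c: "(2::real) ^ m = 2 * 2 ^ (m-1)" using assms by (cases m) auto
  have d: "(2::real) ^ N \<ge> 2" using assms power_increasing[of 1 N "2::real"] by simp
  show "1/2 \<le> aexp N m" unfolding aexp_def using a b c d by (simp add: field_simps)
  show "aexp N m \<le> 1" unfolding aexp_def using a d by (simp add: field_simps)
qed

definition tau :: "nat \<Rightarrow> real \<Rightarrow> (nat \<Rightarrow> real) \<Rightarrow> nat \<times> nat \<Rightarrow> real" where
  "tau N \<eta> x J = Ssum x (fst J) (snd J) powr (aexp N (fst J) * \<eta> - 1)"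

lemma Vfun_tau: "Vfun N \<eta> x = sum (tau N \<eta> x) (Idx N)"
  unfolding Vfun_Idx tau_def by (simp add: case_prod_beta')

lemma tau_nonneg: "0 \<le> tau N \<eta> x J"
  unfolding tau_def by simp

lemma tau_le_V: "J \<in> Idx N \<Longrightarrow> tau N \<eta> x J \<le> Vfun N \<eta> x"
  unfolding Vfun_tau by (rule member_le_sum) (auto simp: finite_Idx tau_nonneg)

definition affI :: "nat \<Rightarrow> nat \<times> nat \<Rightarrow> bool" where
  "affI i J = ((i - 1 \<in> {snd J..<snd J + fst J}) \<noteq> (i \<in> {snd J..<snd J + fst J}))"

definition LintI :: "(nat \<Rightarrow> real) \<Rightarrow> nat \<Rightarrow> nat \<times> nat \<Rightarrow> real" where
  "LintI x i J = (if i \<in> {snd J..<snd J + fst J} then Ssum x (fst J + 1) (snd J - 1) else Ssum x (fst J + 1) (snd J))"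

definition Qint :: "nat \<Rightarrow> real \<Rightarrow> (nat \<Rightarrow> real) \<Rightarrow> nat \<Rightarrow> real" where
  "Qint N \<eta> x i = (\<Sum>J\<in>Idx N. if affI i J then LintI x i J powr (aexp N (fst J) * \<eta> - 1) else 0)"

definition affB :: "nat \<Rightarrow> nat \<times> nat \<Rightarrow> bool" where
  "affB j J = (j \<in> {snd J..<snd J + fst J})"

lemma ex_bounds:
  assumes "(m,k) \<in> Idx N" "0 < \<eta>" "\<eta> < 1"
  shows "-(1 - \<eta>/2) \<le> aexp N m * \<eta> - 1" "aexp N m * \<eta> - 1 \<le> 0"
proof -
  have "1 \<le> m" "m \<le> N" using assms by (auto simp: Idx_iff)
  note ab = aexp_bounds[OF this]
  have "1/2 * \<eta> \<le> aexp N m * \<eta>" using ab assms by (intro mult_right_mono) auto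
  then show "-(1 - \<eta>/2) \<le> aexp N m * \<eta> - 1" by simp
  have "aexp N m * \<eta> \<le> 1 * 1" using ab assms by (intro mult_mono) auto
  then show "aexp N m * \<eta> - 1 \<le> 0" by simp
qed

lemma inner_V:
  fixes x :: "nat \<Rightarrow> real"
  assumes pos: "\<forall>j\<in>{1..N}. x j > 0" and i: "2 \<le> i" "i \<le> N" and p: "0 < p" "p < 1"
    and eta: "0 < \<eta>" "\<eta> < 1" and I: "I \<in> Idx N" and fl: "flag \<Longrightarrow> affI i I"
  shows "Vfun N \<eta> (innerJump i p x) \<le> Vfun N \<eta> x - (if flag then tau N \<eta> x I else 0)
     + (p powr (-(1-\<eta>/2)) + (1-p) powr (-(1-\<eta>/2))) * Qint N \<eta> x i"
proof -
  define G where "G = p powr (-(1-\<eta>/2)) + (1-p) powr (-(1-\<eta>/2))"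
  define a where "a J = G * LintI x i J powr (aexp N (fst J) * \<eta> - 1)" for J
  have trm: "tau N \<eta> (innerJump i p x) J \<le> (if affI i J then a J else tau N \<eta> x J)" if J: "J \<in> Idx N" for J
  proof -
    obtain m k where mk: "J = (m,k)" by (cases J)
    have Jmk: "(m,k) \<in> Idx N" using J mk by simp
    note eb = ex_bounds[OF Jmk eta]
    show ?thesis
    proof (cases "affI i J")
      case False
      then show ?thesis using inner_cases(1)[OF pos i p Jmk] mk by (simp add: affI_def tau_def)
    next
      case True
      show ?thesis
      proof (cases "i \<in> {k..<k+m}")
        case c: True
        then have c2: "i - 1 \<notin> {k..<k+m}" using True mk by (simp add: affI_def)
        note r = inner_cases(2)[OF pos i p Jmk c c2]
        have L: "Ssum x (m+1) (k-1) > 0" using r Ssum_pos[OF pos] by (auto simp: Idx_iff)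
        have "Ssum (innerJump i p x) m k powr (aexp N m * \<eta> - 1) \<le> G * Ssum x (m+1) (k-1) powr (aexp N m * \<eta> - 1)"
          by (rule pow_helper[where q="1-p" and \<beta>="1-\<eta>/2"]) (use p r L eb in \<open>auto simp: G_def\<close>)
        then show ?thesis using True c mk by (simp add: a_def tau_def LintI_def)
      next
        case c: False
        then have c2: "i - 1 \<in> {k..<k+m}" using True mk by (simp add: affI_def)
        note r = inner_cases(3)[OF pos i p Jmk c2 c]
        have L: "Ssum x (m+1) k > 0" using r Ssum_pos[OF pos] by (auto simp: Idx_iff)
        have "Ssum (innerJump i p x) m k powr (aexp N m * \<eta> - 1) \<le> G * Ssum x (m+1) k powr (aexp N m * \<eta> - 1)"
          by (rule pow_helper[where q="p" and \<beta>="1-\<eta>/2"]) (use p r L eb in \<open>auto simp: G_def\<close>)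
        then show ?thesis using True c mk by (simp add: a_def tau_def LintI_def del: atLeastLessThan_iff)
      qed
    qed
  qed
  have "Vfun N \<eta> (innerJump i p x) \<le> Vfun N \<eta> x - (if flag then tau N \<eta> x I else 0)
     + (\<Sum>J\<in>Idx N. if affI i J then a J else 0)"
    unfolding Vfun_tau
    by (rule sum_bound[where aff="affI i"]) (use finite_Idx I fl trm tau_nonneg in auto)
  also have "(\<Sum>J\<in>Idx N. if affI i J then a J else 0) = G * Qint N \<eta> x i"
    unfolding Qint_def a_def sum_distrib_left by (intro sum.cong) auto
  finally show ?thesis by (simp add: G_def)
qed

lemma bd_V:
  fixes x :: "nat \<Rightarrow> real"
  assumes pos: "\<forall>j\<in>{1..N}. x j > 0" and j: "j \<in> {1..N}" and p: "0 < p" "p < 1" and X: "0 < X"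
    and eta: "0 < \<eta>" "\<eta> < 1" and I: "I \<in> Idx N" and fl: "flag \<Longrightarrow> affB j I"
  shows "Vfun N \<eta> (bdJump j p X x) \<le> Vfun N \<eta> x - (if flag then tau N \<eta> x I else 0)
     + real (N * N) * (p powr (-(1-\<eta>/2)) * (if X < 1 then X powr (-(1-\<eta>/2)) else 1))"
proof -
  define a where "a = p powr (-(1-\<eta>/2)) * (if X < 1 then X powr (-(1-\<eta>/2)) else 1)"
  have a0: "0 \<le> a" unfolding a_def by simp
  have trm: "tau N \<eta> (bdJump j p X x) J \<le> (if affB j J then a else tau N \<eta> x J)" if J: "J \<in> Idx N" for J
  proof -
    obtain m k where mk: "J = (m,k)" by (cases J)
    have Jmk: "(m,k) \<in> Idx N" using J mk by simp
    note eb = ex_bounds[OF Jmk eta]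
    show ?thesis
    proof (cases "affB j J")
      case False
      then show ?thesis using bd_cases(1)[OF pos j p X Jmk] mk by (auto simp: affB_def tau_def)
    next
      case True
      then have c: "j \<in> {k..<k+m}" using mk by (simp add: affB_def)
      note r = bd_cases(2)[OF pos j p X Jmk c]
      have "Ssum (bdJump j p X x) m k powr (aexp N m * \<eta> - 1) \<le> p powr (-(1-\<eta>/2)) * X powr (aexp N m * \<eta> - 1)"
        by (rule pow_helper[where q="p" and \<beta>="1-\<eta>/2"]) (use p r X eb in auto)
      also have "X powr (aexp N m * \<eta> - 1) \<le> (if X < 1 then X powr (-(1-\<eta>/2)) else 1)"
      proof (cases "X < 1")
        case True then show ?thesis using X eb by (simp add: powr_mono')
      next
        case False
        then have "X powr (aexp N m * \<eta> - 1) \<le> X powr 0" using eb by (intro powr_mono) auto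
        then show ?thesis using False X by simp
      qed
      then have "p powr (-(1-\<eta>/2)) * X powr (aexp N m * \<eta> - 1) \<le> a"
        unfolding a_def by (intro mult_left_mono) auto
      finally show ?thesis using True mk by (simp add: tau_def)
    qed
  qed
  have "Vfun N \<eta> (bdJump j p X x) \<le> Vfun N \<eta> x - (if flag then tau N \<eta> x I else 0)
     + (\<Sum>J\<in>Idx N. if affB j J then a else 0)"
    unfolding Vfun_tau
    by (rule sum_bound[where aff="affB j"]) (use finite_Idx I fl trm tau_nonneg in auto)
  also have "(\<Sum>J\<in>Idx N. if affB j J then a else 0) \<le> real (card (Idx N)) * a"
    using sum_bounded_above[of "Idx N" "\<lambda>J. if affB j J then a else 0" a] a0 by auto
  also have "\<dots> \<le> real (N * N) * a"
  proof -
    have "real (card (Idx N)) \<le> real (N * N)" using card_Idx[of N] by linarith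
    then show ?thesis using a0 by (intro mult_right_mono) auto
  qed
  finally show ?thesis by (simp add: a_def)
qed

lemma Qint_nonneg: "0 \<le> Qint N \<eta> x i"
  unfolding Qint_def by (intro sum_nonneg) auto

lemma innerExp_le:
  fixes x :: "nat \<Rightarrow> real"
  assumes pos: "\<forall>j\<in>{1..N}. x j > 0" and i: "2 \<le> i" "i \<le> N"
    and eta: "0 < \<eta>" "\<eta> < 1" and I: "I \<in> Idx N" and fl: "flag \<Longrightarrow> affI i I"
  shows "innerExp N \<eta> i x \<le> ennreal (Vfun N \<eta> x - (if flag then tau N \<eta> x I else 0)
     + 2 * Qint N \<eta> x i / (1 - (1-\<eta>/2)))"
proof -
  have W: "0 \<le> Vfun N \<eta> x - (if flag then tau N \<eta> x I else 0)" using tau_le_V[OF I, of \<eta> x] tau_nonneg[of N \<eta> x I] by simp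
  have "innerExp N \<eta> i x \<le> (\<integral>\<^sup>+p. indicator {0<..<1} p * ennreal ((Vfun N \<eta> x - (if flag then tau N \<eta> x I else 0))
      + (p powr (-(1-\<eta>/2)) + (1-p) powr (-(1-\<eta>/2))) * Qint N \<eta> x i) \<partial>lborel)"
    unfolding innerExp_def
  proof (intro nn_integral_mono)
    fix p :: real
    show "indicator {0<..<1} p * ennreal (Vfun N \<eta> (innerJump i p x))
      \<le> indicator {0<..<1} p * ennreal ((Vfun N \<eta> x - (if flag then tau N \<eta> x I else 0))
      + (p powr (-(1-\<eta>/2)) + (1-p) powr (-(1-\<eta>/2))) * Qint N \<eta> x i)"
    proof (cases "p \<in> {0<..<1}")
      case True
      have "Vfun N \<eta> (innerJump i p x) \<le> Vfun N \<eta> x - (if flag then tau N \<eta> x I else 0)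
         + (p powr (-(1-\<eta>/2)) + (1-p) powr (-(1-\<eta>/2))) * Qint N \<eta> x i"
        by (rule inner_V[OF pos i _ _ eta I]) (use True fl in auto)
      then show ?thesis by (auto intro!: ennreal_leI mult_left_mono)
    qed simp
  qed
  also have "\<dots> \<le> ennreal (Vfun N \<eta> x - (if flag then tau N \<eta> x I else 0) + 2 * Qint N \<eta> x i / (1 - (1-\<eta>/2)))"
    by (rule inner_int) (use eta W Qint_nonneg in auto)
  finally show ?thesis .
qed

lemma bdExp_le:
  fixes x :: "nat \<Rightarrow> real"
  assumes pos: "\<forall>j\<in>{1..N}. x j > 0" and j: "j \<in> {1..N}" and T: "0 < T"
    and eta: "0 < \<eta>" "\<eta> < 1" and I: "I \<in> Idx N" and fl: "flag \<Longrightarrow> affB j I"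
  shows "bdExp N \<eta> T j x \<le> ennreal (Vfun N \<eta> x - (if flag then tau N \<eta> x I else 0)
     + 2 * (real (N * N) * (1/(T*(1-(1-\<eta>/2))) + 1)) / (1 - (1-\<eta>/2)))"
proof -
  define W where "W = Vfun N \<eta> x - (if flag then tau N \<eta> x I else 0)"
  have W: "0 \<le> W" using tau_le_V[OF I, of \<eta> x] tau_nonneg[of N \<eta> x I] by (simp add: W_def)
  have "bdExp N \<eta> T j x \<le> (\<integral>\<^sup>+p. \<integral>\<^sup>+X. indicator {0<..<1} p * indicator {0<..} X * ennreal (exp (- X / T) / T)
      * ennreal (W + real (N * N) * p powr (-(1-\<eta>/2)) * (if X < 1 then X powr (-(1-\<eta>/2)) else 1)) \<partial>lborel \<partial>lborel)"
    unfolding bdExp_def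
  proof (intro nn_integral_mono)
    fix p X :: real
    show "indicator {0<..<1} p * indicator {0<..} X * ennreal (exp (- X / T) / T) * ennreal (Vfun N \<eta> (bdJump j p X x))
      \<le> indicator {0<..<1} p * indicator {0<..} X * ennreal (exp (- X / T) / T)
      * ennreal (W + real (N * N) * p powr (-(1-\<eta>/2)) * (if X < 1 then X powr (-(1-\<eta>/2)) else 1))"
    proof (cases "p \<in> {0<..<1} \<and> X \<in> {0<..}")
      case True
      then have "Vfun N \<eta> (bdJump j p X x) \<le> W + real (N * N) * p powr (-(1-\<eta>/2)) * (if X < 1 then X powr (-(1-\<eta>/2)) else 1)"
        using bd_V[OF pos j _ _ _ eta I, of p X flag] fl True by (auto simp: W_def mult.assoc)
      then show ?thesis by (intro mult_left_mono ennreal_leI) auto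
    qed auto
  qed
  also have "\<dots> \<le> ennreal (W + 2 * (real (N * N) * (1/(T*(1-(1-\<eta>/2))) + 1)) / (1 - (1-\<eta>/2)))"
    by (rule bd_int) (use eta W T in auto)
  finally show ?thesis by (simp add: W_def)
qed



lemma expo_core:
  fixes e u c :: real
  assumes "0 < e" "e < u/8" "0 < u" "u \<le> 1/3" "0 \<le> c" "c \<le> 1/2" "2*c + u \<le> 1"
  shows "1 - (1-c)*e - 1/2 \<le> (1 - 1/(2*(1-e)) - e*u/8) * (1 - (1-2*c-u)*e)"
proof -
  define b2 where "b2 = 1 - (1-2*c-u)*e"
  have e1: "e < 1" using assms by simp
  have b2p: "0 < b2" "b2 \<le> 1"
  proof -
    have "(1-2*c-u)*e \<le> 1 * e" using assms e1 by (intro mult_right_mono) auto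
    moreover have "0 \<le> (1-2*c-u)*e" using assms by simp
    ultimately show "0 < b2" "b2 \<le> 1" unfolding b2_def using e1 by auto
  qed
  have id: "2*(1-e) * ((1 - 1/(2*(1-e)) - e*u/8) * b2 - (1 - (1-c)*e - 1/2))
      = e * (u - 2*c*e - 2*u*e - (1-e)*u*b2/4)"
    using e1 unfolding b2_def by (simp add: field_simps)
  have f1: "c*e \<le> e/2" using assms by (simp add: mult_right_mono)
  have f2: "u*e \<le> u/24"
  proof -
    have "u*e \<le> u*(u/8)" using assms by (intro mult_left_mono) auto
    also have "\<dots> \<le> u*(1/24)" using assms by (intro mult_left_mono) auto
    finally show ?thesis by simp
  qed
  have f3: "(1-e)*u*b2 \<le> u"
  proof -
    have "(1-e)*b2 \<le> 1*1" using b2p e1 assms by (intro mult_mono) auto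
    then have "(1-e)*b2*u \<le> 1*u" using assms by (intro mult_right_mono) auto
    then show ?thesis by (simp add: algebra_simps)
  qed
  have "0 < u - 2*c*e - 2*u*e - (1-e)*u*b2/4" using f1 f2 f3 assms by linarith
  then have "0 < e * (u - 2*c*e - 2*u*e - (1-e)*u*b2/4)" using assms by simp
  then have "0 < 2*(1-e) * ((1 - 1/(2*(1-e)) - e*u/8) * b2 - (1 - (1-c)*e - 1/2))" using id by simp
  then have "0 < (1 - 1/(2*(1-e)) - e*u/8) * b2 - (1 - (1-c)*e - 1/2)"
    using e1 by (simp add: zero_less_mult_iff)
  then show ?thesis unfolding b2_def by simp
qed

lemma expo_ineq:
  fixes \<eta> :: real
  assumes m: "1 \<le> m" "m + 1 \<le> N" and eta: "0 < \<eta>" "\<eta> < 1/(8*(2^N-1))"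
  shows "0 \<le> (1/2 + (aexp N m * \<eta> - 1)) / (aexp N (m+1) * \<eta> - 1)"
    and "(1/2 + (aexp N m * \<eta> - 1)) / (aexp N (m+1) * \<eta> - 1) \<le> alphaE \<eta> - \<eta>/(8*(2^N-1))"
proof -
  define Q :: real where "Q = 2^N - 1"
  have N2: "2 \<le> N" using m by simp
  have "(2::real)^2 \<le> 2^N" using N2 by (intro power_increasing) auto
  then have Q3: "3 \<le> Q" unfolding Q_def by simp
  define u where "u = 1/Q"
  define c where "c = (2^(m-1) - 1)/Q"
  have am: "aexp N m = 1 - c" unfolding aexp_def c_def Q_def by simp
  have pm: "(2::real)^m = 2 * 2^(m-1)" using m by (cases m) auto
  have am1: "aexp N (m+1) = 1 - (2*c + u)"
    unfolding aexp_def c_def u_def Q_def using pm Q3 by (simp add: field_simps Q_def)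
  have ab1: "1/2 \<le> aexp N m" "aexp N m \<le> 1" using aexp_bounds[of m N] m by auto
  have ab2: "1/2 \<le> aexp N (m+1)" "aexp N (m+1) \<le> 1" using aexp_bounds[of "m+1" N] m by auto
  have u: "0 < u" "u \<le> 1/3" unfolding u_def using Q3 by (auto simp: field_simps)
  have c: "0 \<le> c" "c \<le> 1/2" "2*c+u \<le> 1" using ab1 ab2 am am1 by auto
  have e: "\<eta> < u/8" using eta unfolding u_def Q_def by (simp add: field_simps)
  have core: "1 - (1-c)*\<eta> - 1/2 \<le> (1 - 1/(2*(1-\<eta>)) - \<eta>*u/8) * (1 - (1-2*c-u)*\<eta>)"
    by (rule expo_core) (use eta e u c in auto)
  have den: "aexp N (m+1) * \<eta> - 1 < 0"
  proof -
    have "aexp N (m+1) * \<eta> \<le> 1 * \<eta>" using ab2 eta by (intro mult_right_mono) auto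
    then show ?thesis using e u by simp
  qed
  have num: "1/2 + (aexp N m * \<eta> - 1) \<le> 0"
  proof -
    have "aexp N m * \<eta> \<le> 1 * \<eta>" using ab1 eta by (intro mult_right_mono) auto
    then show ?thesis using e u by simp
  qed
  show "0 \<le> (1/2 + (aexp N m * \<eta> - 1)) / (aexp N (m+1) * \<eta> - 1)"
    using den num by (simp add: divide_nonpos_neg)
  have "(alphaE \<eta> - \<eta>/(8*(2^N-1))) * (aexp N (m+1) * \<eta> - 1) \<le> 1/2 + (aexp N m * \<eta> - 1)"
  proof -
    have g: "\<eta>/(8*(2^N-1)) = \<eta>*u/8" unfolding u_def Q_def by simp
    show ?thesis using core unfolding g alphaE_def am am1 by (simp add: algebra_simps)
  qed
  then show "(1/2 + (aexp N m * \<eta> - 1)) / (aexp N (m+1) * \<eta> - 1) \<le> alphaE \<eta> - \<eta>/(8*(2^N-1))"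
    using den by (simp add: divide_le_eq)
qed

lemma rate_term:
  fixes L t R e e' es :: real
  assumes "0 < L" "1 \<le> t" "L powr e' \<le> t" "e' < 0" "0 \<le> (1/2+e)/e'" "(1/2+e)/e' \<le> es"
    "0 \<le> R" "R \<le> L powr (1/2)"
  shows "R * L powr e \<le> t powr es"
proof -
  have "R * L powr e \<le> L powr (1/2) * L powr e" using assms by (intro mult_right_mono) auto
  also have "\<dots> = L powr (1/2 + e)" by (simp add: powr_add)
  also have "\<dots> = (L powr e') powr ((1/2+e)/e')" using assms by (simp add: powr_powr)
  also have "\<dots> \<le> t powr ((1/2+e)/e')" using assms by (intro powr_mono2) auto
  also have "\<dots> \<le> t powr es" using assms by (intro powr_mono) auto
  finally show ?thesis .
qed

lemma inner_rate_Q: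
  fixes x :: "nat \<Rightarrow> real"
  assumes pos: "\<forall>j\<in>{1..N}. x j > 0" and i: "2 \<le> i" "i \<le> N"
    and eta: "0 < \<eta>" "\<eta> < 1/(8*(2^N-1))" and t: "1 \<le> t" and tmax: "\<forall>J\<in>Idx N. tau N \<eta> x J \<le> t"
    and K: "0 \<le> K"
  shows "clockRate N TL TR K x i * Qint N \<eta> x i \<le> real (N*N) * t powr (alphaE \<eta> - \<eta>/(8*(2^N-1)))"
proof -
  define R where "R = clockRate N TL TR K x i"
  define es where "es = alphaE \<eta> - \<eta>/(8*(2^N-1))"
  have Q1: "(1::real) \<le> 2^N - 1"
  proof -
    have "(2::real)^1 \<le> 2^N" using i by (intro power_increasing) auto
    then show ?thesis by simp
  qed
  have eta1: "\<eta> < 1"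
  proof -
    have "1/(8*(2^N-1)) \<le> (1::real)/8" using Q1 by (intro divide_left_mono) auto
    then show ?thesis using eta by simp
  qed
  have "i - 1 \<in> {1..N}" "i \<in> {1..N}" using i by auto
  then have xp: "x (i-1) > 0" "x i > 0" using pos by blast+
  have ee: "extE N TL TR x (i-1) = x (i-1)" "extE N TL TR x i = x i" using i by (auto simp: extE_def)
  have R0: "0 \<le> R" unfolding R_def clockRate_def rateR_def using K xp ee by simp
  have Rle: "R \<le> sqrt (x i)"
  proof -
    have "extE N TL TR x i = x i" using i by (simp add: extE_def)
    then have "R \<le> sqrt (min (extE N TL TR x (i-1)) (x i))"
      unfolding R_def clockRate_def rateR_def by simp
    also have "\<dots> \<le> sqrt (x i)" by simp
    finally show ?thesis .
  qed
  have per: "(if affI i J then R * LintI x i J powr (aexp N (fst J) * \<eta> - 1) else 0) \<le> t powr es"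
    if J: "J \<in> Idx N" for J
  proof (cases "affI i J")
    case False then show ?thesis by simp
  next
    case True
    obtain m k where mk: "J = (m,k)" by (cases J)
    have Jmk: "(m,k) \<in> Idx N" using J mk by simp
    have hp: "(0::real) < 1/2" "(1::real)/2 < 1" by auto
    obtain k' where k': "(m+1, k') \<in> Idx N" "i \<in> {k'..<k'+(m+1)}" "LintI x i J = Ssum x (m+1) k'"
    proof (cases "i \<in> {k..<k+m}")
      case c: True
      then have c2: "i - 1 \<notin> {k..<k+m}" using True mk by (simp add: affI_def)
      note r = inner_cases(2)[OF pos i hp Jmk c c2]
      show ?thesis by (rule that[of "k-1"]) (use r c mk in \<open>auto simp: LintI_def\<close>)
    next
      case c: False
      then have c2: "i - 1 \<in> {k..<k+m}" using True mk by (simp add: affI_def)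
      note r = inner_cases(3)[OF pos i hp Jmk c2 c]
      show ?thesis by (rule that[of "k"]) (use r c mk in \<open>auto simp: LintI_def\<close>)
    qed
    have mk1: "1 \<le> m" "m + 1 \<le> N" "1 \<le> k'" "k' + (m+1) \<le> N + 1" using k' Jmk by (auto simp: Idx_iff)
    define L where "L = Ssum x (m+1) k'"
    have L0: "0 < L" unfolding L_def by (rule Ssum_pos[OF pos]) (use mk1 in auto)
    have xiL: "x i \<le> L" unfolding L_def by (rule Ssum_ge_mem[OF pos]) (use mk1 k' in auto)
    have "x i > 0" using pos i by auto
    have RL: "R \<le> L powr (1/2)"
    proof -
      have "R \<le> sqrt L" using Rle xiL by (meson order_trans real_sqrt_le_iff)
      then show ?thesis using L0 by (simp add: powr_half_sqrt)
    qed
    have tL: "L powr (aexp N (m+1) * \<eta> - 1) \<le> t" using tmax k'(1) by (auto simp: tau_def L_def)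
    have e'neg: "aexp N (m+1) * \<eta> - 1 < 0"
    proof -
      have "aexp N (m+1) * \<eta> \<le> 1 * \<eta>" using aexp_bounds[of "m+1" N] mk1 eta by (intro mult_right_mono) auto
      then show ?thesis using eta1 by simp
    qed
    have "R * L powr (aexp N m * \<eta> - 1) \<le> t powr es"
      unfolding es_def
      by (rule rate_term[OF L0 t tL e'neg expo_ineq[OF mk1(1,2) eta] R0 RL])
    then show ?thesis using True mk k'(3) by (simp add: L_def)
  qed
  have "R * Qint N \<eta> x i = (\<Sum>J\<in>Idx N. if affI i J then R * LintI x i J powr (aexp N (fst J) * \<eta> - 1) else 0)"
    unfolding Qint_def sum_distrib_left by (intro sum.cong) auto
  also have "\<dots> \<le> real (card (Idx N)) * t powr es"
    using sum_bounded_above[of "Idx N" _ "t powr es"] per by auto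
  also have "\<dots> \<le> real (N*N) * t powr es"
  proof -
    have "real (card (Idx N)) \<le> real (N * N)" using card_Idx[of N] by linarith
    then show ?thesis by (intro mult_right_mono) auto
  qed
  finally show ?thesis unfolding R_def es_def .
qed



lemma extE_pos:
  assumes pos: "\<forall>j\<in>{1..N}. x j > 0" and "TL > 0" "TR > 0" "j \<le> N + 1"
  shows "extE N TL TR x j > 0"
  using assms by (auto simp: extE_def)

lemma extE_ge:
  assumes pos: "\<forall>j\<in>{1..N}. s \<le> x j" and "s \<le> TL" "s \<le> TR" "j \<le> N + 1"
  shows "s \<le> extE N TL TR x j"
  using assms by (auto simp: extE_def)

theorem lemma4p6:
  fixes N :: nat and TL TR :: real
  assumes "N \<ge> 1" and "TL > 0" and "TR > 0"
  shows "\<exists>K0. \<forall>K \<ge> K0. \<exists>\<eta>0 > 0. \<forall>\<eta>. 0 < \<eta> \<and> \<eta> < \<eta>0 \<longrightarrow>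
           (\<exists>C1 > 0. \<exists>M'. \<forall>E :: nat \<Rightarrow> real.
              (\<forall>i \<in> {1..N}. E i > 0) \<and> Vfun N \<eta> E > M' \<longrightarrow>
                expVafter N TL TR K \<eta> E
                  + ennreal (C1 / totRate N TL TR K E * Vfun N \<eta> E powr alphaE \<eta>)
                \<le> ennreal (Vfun N \<eta> E))"
proof -
  note N1 = assms(1) and TL = assms(2) and TR = assms(3)
  have NN: "1 \<le> real (N*N)"
  proof -
    have "1 * 1 \<le> N * N" using mult_le_mono[OF N1 N1] .
    then show ?thesis by (metis mult_1 of_nat_1 of_nat_le_iff)
  qed
  define Q :: real where "Q = 2^N - 1"
  have Q1: "1 \<le> Q"
  proof -
    have "(2::real)^1 \<le> 2^N" using N1 by (intro power_increasing) auto
    then show ?thesis by (simp add: Q_def)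
  qed
  have main: "\<exists>C1 > 0. \<exists>M'. \<forall>E :: nat \<Rightarrow> real.
              (\<forall>i \<in> {1..N}. E i > 0) \<and> Vfun N \<eta> E > M' \<longrightarrow>
                expVafter N TL TR K \<eta> E
                  + ennreal (C1 / totRate N TL TR K E * Vfun N \<eta> E powr alphaE \<eta>)
                \<le> ennreal (Vfun N \<eta> E)"
    if K: "1 \<le> K" and eta: "0 < \<eta>" "\<eta> < 1/(8*Q)" for K \<eta> :: real
  proof -
    have eta8: "\<eta> < 1/8"
    proof -
      have "1/(8*Q) \<le> (1::real)/8" using Q1 by (intro divide_left_mono) auto
      then show ?thesis using eta by simp
    qed
    have eta': "0 < \<eta>" "\<eta> < 1/(8*(2^N-1))" using eta by (auto simp: Q_def)
    define d where "d = 1 - (1 - \<eta>/2)"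
    have d0: "0 < d" using eta by (simp add: d_def)
    define cb where "cb T = 2 * (real (N * N) * (1/(T*(1-(1-\<eta>/2))) + 1)) / (1-(1-\<eta>/2))" for T :: real
    have cb0: "0 < cb T" if "0 < T" for T
    proof -
      have "0 < 2 / (T * \<eta>) + 1" using that eta by (simp add: add_pos_pos)
      then show ?thesis using that eta N1 by (simp add: cb_def)
    qed
    define \<alpha> where "\<alpha> = alphaE \<eta>"
    define \<gamma> where "\<gamma> = \<eta>/(8*(2^N-1))"
    define es where "es = \<alpha> - \<gamma>"
    have \<gamma>0: "0 < \<gamma>" using eta Q1 by (simp add: \<gamma>_def Q_def)
    have \<alpha>0: "0 < \<alpha>" "\<alpha> \<le> 1"
    proof -
      have "1/(2*(1-\<eta>)) < 1" using eta8 by (simp add: field_simps)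
      moreover have "0 < 1/(2*(1-\<eta>))" using eta8 by simp
      ultimately show "0 < \<alpha>" "\<alpha> \<le> 1" by (auto simp: \<alpha>_def alphaE_def)
    qed
    define Cst where "Cst = K * (cb TL + cb TR)"
    define Cc where "Cc = 2 * real (N*N) / d"
    have Cst0: "0 < Cst" using K cb0[OF TL] cb0[OF TR] by (simp add: Cst_def)
    have Cc0: "0 < Cc" using d0 N1 by (simp add: Cc_def)
    define M0 where "M0 = max 1 (max (1/TL) (max (1/TR) (max ((4*(N+1)*Cst) powr (1/\<alpha>)) ((4*(N+1)*Cc) powr (1/\<gamma>)))))"
    define C1 :: real where "C1 = 1/(2*real (N*N))"
    have C10: "0 < C1" using N1 by (simp add: C1_def)
    show ?thesis
    proof (rule exI[of _ C1], rule conjI[OF C10], rule exI[of _ "real (N*N) * M0"], intro allI impI)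
      fix x :: "nat \<Rightarrow> real"
      assume xa: "(\<forall>i\<in>{1..N}. x i > 0) \<and> real (N*N) * M0 < Vfun N \<eta> x"
      then have pos: "\<forall>i\<in>{1..N}. x i > 0" and VM: "real (N*N) * M0 < Vfun N \<eta> x" by auto
      define V where "V = Vfun N \<eta> x"
      have "(1,1) \<in> Idx N" using N1 by (auto simp: Idx_iff)
      then have Idx_ne: "Idx N \<noteq> {}" by auto
      define t where "t = Max (tau N \<eta> x ` Idx N)"
      have "t \<in> tau N \<eta> x ` Idx N" unfolding t_def using Idx_ne finite_Idx by (intro Max_in) auto
      then obtain I where I: "I \<in> Idx N" "tau N \<eta> x I = t" by auto
      have tmax: "\<forall>J\<in>Idx N. tau N \<eta> x J \<le> t" unfolding t_def using finite_Idx by auto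
      have t0: "0 \<le> t" using I(2) tau_nonneg by metis
      have Vt: "V \<le> real (N*N) * t"
      proof -
        have "V = sum (tau N \<eta> x) (Idx N)" by (simp add: V_def Vfun_tau)
        also have "\<dots> \<le> real (card (Idx N)) * t" using sum_bounded_above[of "Idx N" "tau N \<eta> x" t] tmax by auto
        also have "\<dots> \<le> real (N*N) * t"
        proof -
          have "real (card (Idx N)) \<le> real (N * N)" using card_Idx[of N] by linarith
          then show ?thesis using t0 by (intro mult_right_mono) auto
        qed
        finally show ?thesis .
      qed
      have tM0: "M0 < t"
      proof -
        have "real (N*N) * M0 < real (N*N) * t" using VM Vt by (simp add: V_def)
        then show ?thesis using N1 by (simp add: mult_less_cancel_left)
      qed
      have t1: "1 < t" and tTL: "1/TL < t" and tTR: "1/TR < t"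
        and tCst: "(4*(N+1)*Cst) powr (1/\<alpha>) < t" and tCc: "(4*(N+1)*Cc) powr (1/\<gamma>) < t"
        using tM0 unfolding M0_def by auto
      have eta1: "\<eta> < 1" using eta8 by simp
      obtain mI kI where IE: "I = (mI,kI)" by (cases I)
      have Ik: "1 \<le> mI" "1 \<le> kI" "kI + mI \<le> N+1" using I(1) IE by (auto simp: Idx_iff)
      define c where "c = kI"
      have c: "1 \<le> c" "c \<le> N" using Ik by (auto simp: c_def)
      define R where "R i = clockRate N TL TR K x i" for i
      define Rt where "Rt = sum R {1..N+1}"
      have Rt_eq: "totRate N TL TR K x = Rt" by (simp add: totRate_def R_def Rt_def)
      have R0: "0 \<le> R i" if "i \<in> {1..N+1}" for i
      proof -
        have "0 < extE N TL TR x (i-1)" "0 < extE N TL TR x i"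
          using extE_pos[OF pos TL TR, of "i-1"] extE_pos[OF pos TL TR, of i] that by auto
        then show ?thesis using K by (simp add: R_def clockRate_def rateR_def)
      qed
      have RK: "R i \<le> K" for i by (simp add: R_def clockRate_def rateR_def)
      define s where "s = t powr (-1/(1-\<eta>))"
      have s0: "0 < s" using t1 by (simp add: s_def)
      have sx: "\<forall>j\<in>{1..N}. s \<le> x j"
      proof
        fix j assume j: "j \<in> {1..N}"
        have xj: "0 < x j" using pos j by blast
        have "(1,j) \<in> Idx N" using j by (auto simp: Idx_iff)
        then have "tau N \<eta> x (1,j) \<le> t" using tmax by blast
        moreover have "tau N \<eta> x (1,j) = x j powr (\<eta> - 1)"
          by (simp add: tau_def Ssum_def aexp_def)
        ultimately have le: "x j powr (\<eta> - 1) \<le> t" by simp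
        have e1: "(\<eta> - 1) * (-1/(1-\<eta>)) = 1" using eta1 by (simp add: field_simps)
        have "s \<le> (x j powr (\<eta> - 1)) powr (-1/(1-\<eta>))"
          unfolding s_def by (rule powr_mono2') (use eta1 xj le in auto)
        also have "\<dots> = x j powr ((\<eta> - 1) * (-1/(1-\<eta>)))" by (simp add: powr_powr)
        also have "\<dots> = x j" using e1 xj by simp
        finally show "s \<le> x j" .
      qed
      have s_le: "s \<le> 1/t"
      proof -
        have "1 \<le> 1/(1-\<eta>)" using eta eta1 by (simp add: field_simps)
        then have "s \<le> t powr (-1)" unfolding s_def using t1 by (intro powr_mono) (auto simp: field_simps)
        then show ?thesis using t1 by (simp add: powr_minus_divide)
      qed
      have sTL: "s \<le> TL"
      proof -
        have "1/t \<le> TL" using tTL TL t1 by (simp add: field_simps)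
        then show ?thesis using s_le by simp
      qed
      have sTR: "s \<le> TR"
      proof -
        have "1/t \<le> TR" using tTR TR t1 by (simp add: field_simps)
        then show ?thesis using s_le by simp
      qed
      have s1: "s \<le> 1"
      proof -
        have "1/t \<le> 1" using t1 by simp
        then show ?thesis using s_le by linarith
      qed
      have Rc: "sqrt s \<le> R c"
      proof -
        have "s \<le> extE N TL TR x (c-1)" "s \<le> extE N TL TR x c"
          using extE_ge[OF sx sTL sTR, of "c-1"] extE_ge[OF sx sTL sTR, of c] c by auto
        then have "sqrt s \<le> sqrt (min (extE N TL TR x (c-1)) (extE N TL TR x c))" by simp
        moreover have "sqrt s \<le> K" using s1 K s0 by (meson order_trans real_sqrt_le_1_iff)
        ultimately show ?thesis by (simp add: R_def clockRate_def rateR_def)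
      qed
      have Rct: "t powr \<alpha> \<le> R c * t"
      proof -
        have "sqrt s * t = t powr (-1/(1-\<eta>) * (1/2)) * t powr 1"
          using s0 t1 by (simp add: powr_half_sqrt[symmetric] s_def powr_powr)
        also have "\<dots> = t powr (-1/(1-\<eta>) * (1/2) + 1)" by (rule powr_add[symmetric])
        also have "-1/(1-\<eta>) * (1/2) + 1 = \<alpha>" using eta1 by (simp add: \<alpha>_def alphaE_def field_simps)
        finally have "t powr \<alpha> = sqrt s * t" by simp
        also have "\<dots> \<le> R c * t" using Rc t1 by (intro mult_right_mono) auto
        finally show ?thesis .
      qed
      define B where "B i = (if i = 1 then cb TL else if i = N+1 then cb TR else 2 * Qint N \<eta> x i / d)" for i
      define Y where "Y i = V - (if i = c then t else 0) + B i" for i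
      have B0: "0 \<le> B i" for i
        using cb0[OF TL] cb0[OF TR] d0 Qint_nonneg[of N \<eta> x i] by (simp add: B_def)
      have tV: "t \<le> V" using tau_le_V[OF I(1), of \<eta> x] I(2) by (simp add: V_def)
      have Y0: "0 \<le> Y i" for i using B0[of i] tV t0 by (simp add: Y_def)
      have JY: "jumpExp N TL TR \<eta> i x \<le> ennreal (Y i)" if i: "i \<in> {1..N+1}" for i
      proof (cases "i = 1")
        case True
        have fl: "1 = c \<Longrightarrow> affB 1 I" using IE Ik by (auto simp: affB_def c_def)
        have "bdExp N \<eta> TL 1 x \<le> ennreal (Vfun N \<eta> x - (if 1 = c then tau N \<eta> x I else 0)
           + 2 * (real (N * N) * (1/(TL*(1-(1-\<eta>/2))) + 1)) / (1 - (1-\<eta>/2)))"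
          by (rule bdExp_le[OF pos _ TL eta(1) eta1 I(1) fl]) (use N1 in auto)
        then show ?thesis using True I(2) by (cases "c = 1") (auto simp: jumpExp_def Y_def B_def cb_def V_def)
      next
        case F1: False
        show ?thesis
        proof (cases "i = N+1")
          case True
          have "bdExp N \<eta> TR N x \<le> ennreal (Vfun N \<eta> x - (if False then tau N \<eta> x I else 0)
             + 2 * (real (N * N) * (1/(TR*(1-(1-\<eta>/2))) + 1)) / (1 - (1-\<eta>/2)))"
            by (rule bdExp_le[OF pos _ TR eta(1) eta1 I(1)]) (use N1 in auto)
          moreover have "i \<noteq> c" using True c by simp
          ultimately show ?thesis using True F1 by (simp add: jumpExp_def Y_def B_def cb_def V_def)
        next
          case False
          have i2: "2 \<le> i" "i \<le> N" using i F1 False by auto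
          have fl: "i = c \<Longrightarrow> affI i I" using IE Ik i2 by (auto simp: affI_def c_def)
          have "innerExp N \<eta> i x \<le> ennreal (Vfun N \<eta> x - (if i = c then tau N \<eta> x I else 0)
             + 2 * Qint N \<eta> x i / (1 - (1-\<eta>/2)))"
            by (rule innerExp_le[OF pos i2 eta(1) eta1 I(1) fl])
          then show ?thesis using False F1 I(2) by (cases "i = c") (auto simp: jumpExp_def Y_def B_def d_def V_def)
        qed
      qed
      have RB: "R i * B i \<le> Cst + Cc * t powr es" if i: "i \<in> {1..N+1}" for i
      proof -
        have R0i: "0 \<le> R i" using R0[OF i] .
        have CcT: "0 \<le> Cc * t powr es" using Cc0 by simp
        show ?thesis
        proof (cases "i = 1 \<or> i = N+1")
          case True
          have "R i * B i \<le> K * B i" using RK B0 by (intro mult_right_mono) auto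
          also have "\<dots> \<le> K * (cb TL + cb TR)"
            using True K cb0[OF TL] cb0[OF TR] by (intro mult_left_mono) (auto simp: B_def)
          finally show ?thesis using CcT by (simp add: Cst_def)
        next
          case False
          have i2: "2 \<le> i" "i \<le> N" using i False by auto
          have "R i * Qint N \<eta> x i \<le> real (N*N) * t powr (alphaE \<eta> - \<eta>/(8*(2^N-1)))"
            unfolding R_def by (rule inner_rate_Q[OF pos i2 eta' _ tmax]) (use t1 K in auto)
          then have "R i * Qint N \<eta> x i \<le> real (N*N) * t powr es" by (simp add: es_def \<alpha>_def \<gamma>_def)
          then have "(2/d) * (R i * Qint N \<eta> x i) \<le> (2/d) * (real (N*N) * t powr es)"
            using d0 by (intro mult_left_mono) auto
          moreover have "R i * B i = (2/d) * (R i * Qint N \<eta> x i)" using False by (simp add: B_def)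
          moreover have "(2/d) * (real (N*N) * t powr es) = Cc * t powr es" by (simp add: Cc_def)
          ultimately show ?thesis using Cst0 by simp
        qed
      qed
      have cin: "c \<in> {1..N+1}" using c by auto
      have Rtpos: "0 < Rt"
      proof -
        have "R c \<le> Rt" unfolding Rt_def by (rule member_le_sum) (use cin R0 in auto)
        moreover have "0 < sqrt s" using s0 by simp
        ultimately show ?thesis using Rc by linarith
      qed
      have sumRY: "(\<Sum>i=1..N+1. R i * Y i) = V * Rt - R c * t + (\<Sum>i=1..N+1. R i * B i)"
      proof -
        have "(\<Sum>i=1..N+1. R i * Y i) = (\<Sum>i=1..N+1. V * R i - (if i = c then R c * t else 0) + R i * B i)"
          by (intro sum.cong) (auto simp: Y_def algebra_simps)
        also have "\<dots> = V * Rt - R c * t + (\<Sum>i=1..N+1. R i * B i)"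
          using cin by (simp add: sum.distrib sum_subtractf sum_distrib_left[symmetric] Rt_def sum.delta)
        finally show ?thesis .
      qed
      have sumRB: "(\<Sum>i=1..N+1. R i * B i) \<le> real (N+1) * (Cst + Cc * t powr es)"
        using sum_bounded_above[of "{1..N+1}" "\<lambda>i. R i * B i" "Cst + Cc * t powr es"] RB by auto
      have thr1: "4*(N+1)*Cst \<le> t powr \<alpha>"
      proof -
        have "((4*(N+1)*Cst) powr (1/\<alpha>)) powr \<alpha> \<le> t powr \<alpha>"
          using tCst \<alpha>0 by (intro powr_mono2) auto
        moreover have "((4*(N+1)*Cst) powr (1/\<alpha>)) powr \<alpha> = 4*(N+1)*Cst"
          using \<alpha>0 Cst0 by (simp add: powr_powr)
        ultimately show ?thesis by simp
      qed
      have thr2: "4*(N+1)*Cc \<le> t powr \<gamma>"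
      proof -
        have "((4*(N+1)*Cc) powr (1/\<gamma>)) powr \<gamma> \<le> t powr \<gamma>"
          using tCc \<gamma>0 by (intro powr_mono2) auto
        moreover have "((4*(N+1)*Cc) powr (1/\<gamma>)) powr \<gamma> = 4*(N+1)*Cc"
          using \<gamma>0 Cc0 by (simp add: powr_powr)
        ultimately show ?thesis by simp
      qed
      have part2: "real (N+1) * (Cc * t powr es) \<le> t powr \<alpha> / 4"
      proof -
        have "4 * (real (N+1) * Cc) * t powr es \<le> t powr \<gamma> * t powr es"
          using thr2 by (intro mult_right_mono) (auto simp: algebra_simps)
        also have "\<dots> = t powr \<alpha>" by (simp add: es_def powr_add[symmetric])
        finally show ?thesis by simp
      qed
      have part1: "real (N+1) * Cst \<le> t powr \<alpha> / 4" using thr1 by (simp add: algebra_simps)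
      have V0: "0 < V"
      proof -
        have "1 \<le> M0" by (simp add: M0_def)
        moreover have "1 \<le> real (N*N)" using NN .
        ultimately have "1 \<le> real (N*N) * M0" by (metis mult_mono' mult_1 zero_le_one)
        then show ?thesis using VM by (simp add: V_def)
      qed
      have Vpow: "C1 * V powr \<alpha> \<le> t powr \<alpha> / 2"
      proof -
        have "V powr \<alpha> \<le> (real (N*N) * t) powr \<alpha>" using Vt V0 \<alpha>0 by (intro powr_mono2) auto
        also have "\<dots> = real (N*N) powr \<alpha> * t powr \<alpha>" using t0 by (simp add: powr_mult)
        also have "\<dots> \<le> real (N*N) * t powr \<alpha>"
        proof -
          have "real (N*N) powr \<alpha> \<le> real (N*N) powr 1" using \<alpha>0 NN by (intro powr_mono) auto
          then have "real (N*N) powr \<alpha> \<le> real (N*N)" using NN by simp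
          then show ?thesis by (intro mult_right_mono) auto
        qed
        finally have "C1 * V powr \<alpha> \<le> C1 * (real (N*N) * t powr \<alpha>)" using C10 by (intro mult_left_mono) auto
        also have "\<dots> = t powr \<alpha> / 2" using N1 by (simp add: C1_def)
        finally show ?thesis .
      qed
      have key: "(\<Sum>i=1..N+1. R i * Y i) + C1 * V powr \<alpha> \<le> V * Rt"
        using sumRY sumRB Rct part1 part2 Vpow by (simp add: algebra_simps)
      have "expVafter N TL TR K \<eta> x = (\<Sum>i=1..N+1. ennreal (R i / Rt) * jumpExp N TL TR \<eta> i x)"
        by (simp add: expVafter_def R_def Rt_eq)
      also have "\<dots> \<le> (\<Sum>i=1..N+1. ennreal (R i / Rt) * ennreal (Y i))"
        by (intro sum_mono mult_left_mono JY) auto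
      also have "\<dots> = (\<Sum>i=1..N+1. ennreal (R i / Rt * Y i))"
      proof (intro sum.cong refl)
        fix i assume i: "i \<in> {1..N+1}"
        show "ennreal (R i / Rt) * ennreal (Y i) = ennreal (R i / Rt * Y i)"
          by (rule ennreal_mult[symmetric]) (use R0[OF i] Rtpos Y0 in auto)
      qed
      also have "\<dots> = ennreal (\<Sum>i=1..N+1. R i / Rt * Y i)"
        by (rule sum_ennreal) (use R0 Rtpos Y0 in auto)
      finally have E1: "expVafter N TL TR K \<eta> x \<le> ennreal (\<Sum>i=1..N+1. R i / Rt * Y i)" .
      have S0: "0 \<le> (\<Sum>i=1..N+1. R i / Rt * Y i)" using R0 Rtpos Y0 by (intro sum_nonneg) auto
      have C0: "0 \<le> C1 / Rt * V powr \<alpha>" using C10 Rtpos by simp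
      have fin: "(\<Sum>i=1..N+1. R i / Rt * Y i) + C1 / Rt * V powr \<alpha> \<le> V"
      proof -
        have "(\<Sum>i=1..N+1. R i / Rt * Y i) + C1 / Rt * V powr \<alpha> = ((\<Sum>i=1..N+1. R i * Y i) + C1 * V powr \<alpha>) / Rt"
          by (simp add: sum_divide_distrib add_divide_distrib)
        also have "\<dots> \<le> (V * Rt) / Rt" using key Rtpos by (intro divide_right_mono) auto
        also have "\<dots> = V" using Rtpos by simp
        finally show ?thesis .
      qed
      have "expVafter N TL TR K \<eta> x + ennreal (C1 / Rt * V powr \<alpha>)
          \<le> ennreal (\<Sum>i=1..N+1. R i / Rt * Y i) + ennreal (C1 / Rt * V powr \<alpha>)"
        using E1 by (rule add_right_mono)
      also have "\<dots> = ennreal ((\<Sum>i=1..N+1. R i / Rt * Y i) + C1 / Rt * V powr \<alpha>)"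
        using S0 C0 by (simp add: ennreal_plus)
      also have "\<dots> \<le> ennreal V" using fin by (rule ennreal_leI)
      finally show "expVafter N TL TR K \<eta> x + ennreal (C1 / totRate N TL TR K x * Vfun N \<eta> x powr alphaE \<eta>) \<le> ennreal (Vfun N \<eta> x)"
        by (simp add: Rt_eq V_def \<alpha>_def)
    qed
  qed
  show ?thesis
    apply (rule exI[of _ 1])
    apply (intro allI impI)
    subgoal for K
      apply (rule exI[of _ "1/(8*Q)"])
      using Q1 main[of K] by auto
    done
qed


end
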